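(* Let $p$ be a prime, $q$ a power of $p$, and $F$ a field of characteristic $p$ containing $\mathbb{F}_q$. Let $L\in F[x]$ be a monic $q$-polynomial of $q$-degree $n$ such that: (1) $L(x)/x$ is irreducible over $F$; (2) $L$ is not a $q^s$-polynomial for any integer $s>1$; (3) $L=x^{q^n}+a_{n-k}x^{q^{n-k}}+\cdots+a_0x$ with $1\leq k\leq n$ and $a_{n-k}\neq0$. Let $V$ be the space of roots of $L$ in a splitting field $E$ of $L$ over $F$, and let $\alpha,\beta\in V$ be linearly independent over $\mathbb{F}_q$. If $d$ is a positive integer such that $\alpha^d,\alpha^{d-1}\beta,\dots,\beta^d$ are linearly dependent over $F$, then $d\geq q^k+1$.
   Context: A $q$-polynomial of $q$-degree $n$ is $\sum_{i=0}^n a_ix^{q^i}$ with $a_n\neq0$; it is a $q^s$-polynomial if only exponents $q^j$ with $s\mid j$ occur. *)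

theory Defs
  imports "HOL-Computational_Algebra.Polynomial"
begin

definition field_hom :: "('f::field \<Rightarrow> 'e::field) \<Rightarrow> bool" where
  "field_hom \<phi> \<longleftrightarrow> \<phi> 1 = 1 \<and> (\<forall>a b. \<phi> (a + b) = \<phi> a + \<phi> b) \<and> (\<forall>a b. \<phi> (a * b) = \<phi> a * \<phi> b)"

definition is_subfield :: "'e::field set \<Rightarrow> bool" where
  "is_subfield S \<longleftrightarrow> 0 \<in> S \<and> 1 \<in> S \<and> (\<forall>a\<in>S. \<forall>b\<in>S. a + b \<in> S \<and> a * b \<in> S)
     \<and> (\<forall>a\<in>S. - a \<in> S \<and> inverse a \<in> S)"

text \<open>E (the type 'e) is a splitting field of L over F, where F embeds into E via phi:
  the image of L splits into linear factors over E, and E is generated as a field by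
  phi(F) together with the roots of L.\<close>
definition is_splitting_field :: "('f::field \<Rightarrow> 'e::field) \<Rightarrow> 'f poly \<Rightarrow> bool" where
  "is_splitting_field \<phi> L \<longleftrightarrow> field_hom \<phi> \<and>
     (\<exists>c rs. map_poly \<phi> L = smult c (prod_list (map (\<lambda>r. [:- r, 1:]) rs))) \<and>
     (\<forall>S. is_subfield S \<and> range \<phi> \<subseteq> S \<and> {x. poly (map_poly \<phi> L) x = 0} \<subseteq> S \<longrightarrow> S = UNIV)"

definition is_q_poly :: "nat \<Rightarrow> 'f::field poly \<Rightarrow> bool" where
  "is_q_poly q L \<longleftrightarrow> (\<forall>j. coeff L j \<noteq> 0 \<longrightarrow> (\<exists>i. j = q ^ i))"

definition is_qs_poly :: "nat \<Rightarrow> nat \<Rightarrow> 'f::field poly \<Rightarrow> bool" where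
  "is_qs_poly q s L \<longleftrightarrow> (\<forall>j. coeff L j \<noteq> 0 \<longrightarrow> (\<exists>i. s dvd i \<and> j = q ^ i))"

end

theory Submission
  imports Defs "Subresultants.Resultant_Prelim"
begin


definition inK :: "'a set \<Rightarrow> 'a::zero poly \<Rightarrow> bool" where
  "inK K p \<longleftrightarrow> (\<forall>i. coeff p i \<in> K)"

locale subf =
  fixes K :: "'a::field set"
  assumes z: "0 \<in> K" and o: "1 \<in> K" and ad: "x \<in> K \<Longrightarrow> y \<in> K \<Longrightarrow> x + y \<in> K"
    and mu: "x \<in> K \<Longrightarrow> y \<in> K \<Longrightarrow> x * y \<in> K"
    and ne: "x \<in> K \<Longrightarrow> - x \<in> K" and iv: "x \<in> K \<Longrightarrow> inverse x \<in> K"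
begin

lemma sum_K: "finite A \<Longrightarrow> (\<And>i. i \<in> A \<Longrightarrow> f i \<in> K) \<Longrightarrow> sum f A \<in> K"
  by (induction A rule: finite_induct) (auto intro: z ad)

lemma inK_0: "inK K 0" by (simp add: inK_def z)
lemma inK_1: "inK K 1" by (simp add: inK_def coeff_1 z o)
lemma inK_add: "inK K p \<Longrightarrow> inK K q \<Longrightarrow> inK K (p + q)"
  by (simp add: inK_def ad)
lemma inK_uminus: "inK K p \<Longrightarrow> inK K (- p)"
  by (simp add: inK_def ne)
lemma inK_diff: "inK K p \<Longrightarrow> inK K q \<Longrightarrow> inK K (p - q)"
  using inK_add inK_uminus by (metis diff_conv_add_uminus)
lemma inK_mult: "inK K p \<Longrightarrow> inK K q \<Longrightarrow> inK K (p * q)"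
  unfolding inK_def coeff_mult by (auto intro!: sum_K mu)
lemma inK_monom: "c \<in> K \<Longrightarrow> inK K (monom c n)"
  by (simp add: inK_def coeff_monom z)
lemma inK_const: "c \<in> K \<Longrightarrow> inK K [:c:]"
  using inK_monom[of c 0] by (simp add: monom_0)
lemma inK_lead: "inK K p \<Longrightarrow> lead_coeff p \<in> K"
  by (simp add: inK_def)

lemma deg_drop: fixes p :: "'a poly"
  assumes "\<And>j. j \<ge> N \<Longrightarrow> coeff p j = 0"
  shows "p = 0 \<or> degree p < N"
proof (cases "p = 0")
  case False
  then have "coeff p (degree p) \<noteq> 0" by simp
  then show ?thesis using assms by (meson not_le)
qed simp

lemma reduce_step:
  fixes A B :: "'a poly"
  assumes "A \<noteq> 0" "B \<noteq> 0" "degree B \<le> degree A"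
  defines "m \<equiv> monom (lead_coeff A / lead_coeff B) (degree A - degree B)"
  shows "A - m * B = 0 \<or> degree (A - m * B) < degree A"
proof (rule deg_drop)
  fix j assume j: "degree A \<le> j"
  show "coeff (A - m * B) j = 0"
  proof (cases "j = degree A")
    case True
    then show ?thesis using assms by (simp add: m_def coeff_monom_mult)
  next
    case False
    then have "j > degree A" using j by simp
    then have "coeff A j = 0" by (simp add: coeff_eq_0)
    moreover have "coeff B (j - (degree A - degree B)) = 0"
      using \<open>j > degree A\<close> assms(3) by (intro coeff_eq_0) linarith
    ultimately show ?thesis by (simp add: m_def coeff_monom_mult)
  qed
qed

definition msr :: "'a poly \<Rightarrow> nat" where
  "msr A = (if A = 0 then 0 else Suc (degree A))"

lemma bezout_K:
  "inK K A \<Longrightarrow> inK K B \<Longrightarrow> \<exists>S T D. inK K S \<and> inK K T \<and> inK K D \<and> S * A + T * B = D \<and> D dvd A \<and> D dvd B"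
proof (induction "msr A + msr B" arbitrary: A B rule: less_induct)
  case (less A B)
  show ?case
  proof (cases "A = 0")
    case True
    then show ?thesis using less.prems by (intro exI[of _ 0] exI[of _ 1] exI[of _ B]) (auto simp: inK_0 inK_1)
  next
    case A0: False
    show ?thesis
    proof (cases "B = 0")
      case True
      then show ?thesis using less.prems by (intro exI[of _ 1] exI[of _ 0] exI[of _ A]) (auto simp: inK_0 inK_1)
    next
      case B0: False
      show ?thesis
      proof (cases "degree B \<le> degree A")
        case True
        define m where "m = monom (lead_coeff A / lead_coeff B) (degree A - degree B)"
        have mK: "inK K m" unfolding m_def
          by (intro inK_monom) (simp add: divide_inverse mu iv inK_lead less.prems)
        have red: "A - m * B = 0 \<or> degree (A - m * B) < degree A"
          using reduce_step[OF A0 B0 True] by (simp add: m_def)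
        have "msr (A - m * B) + msr B < msr A + msr B" using red A0 by (auto simp: msr_def)
        moreover have "inK K (A - m * B)" using less.prems mK by (intro inK_diff inK_mult)
        ultimately obtain S T D where IH: "inK K S" "inK K T" "inK K D" "S * (A - m * B) + T * B = D"
           "D dvd (A - m * B)" "D dvd B"
          using less.hyps[of "A - m * B" B] less.prems by blast
        show ?thesis
        proof (intro exI conjI)
          show "inK K S" "inK K (T - S * m)" "inK K D" using IH mK by (auto intro: inK_diff inK_mult)
          show "S * A + (T - S * m) * B = D" using IH(4) by (simp add: algebra_simps)
          show "D dvd B" by fact
          have "A = (A - m * B) + m * B" by simp
          then show "D dvd A" using IH(5,6) by (metis dvd_add dvd_mult)
        qed
      next
        case False
        then have F: "degree A \<le> degree B" by simp
        define m where "m = monom (lead_coeff B / lead_coeff A) (degree B - degree A)"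
        have mK: "inK K m" unfolding m_def
          by (intro inK_monom) (simp add: divide_inverse mu iv inK_lead less.prems)
        have red: "B - m * A = 0 \<or> degree (B - m * A) < degree B"
          using reduce_step[OF B0 A0 F] by (simp add: m_def)
        have "msr A + msr (B - m * A) < msr A + msr B" using red B0 by (auto simp: msr_def)
        moreover have "inK K (B - m * A)" using less.prems mK by (intro inK_diff inK_mult)
        ultimately obtain S T D where IH: "inK K S" "inK K T" "inK K D" "S * A + T * (B - m * A) = D"
           "D dvd A" "D dvd (B - m * A)"
          using less.hyps[of A "B - m * A"] less.prems by blast
        show ?thesis
        proof (intro exI conjI)
          show "inK K (S - T * m)" "inK K T" "inK K D" using IH mK by (auto intro: inK_diff inK_mult)
          show "(S - T * m) * A + T * B = D" using IH(4) by (simp add: algebra_simps)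
          show "D dvd A" by fact
          have "B = (B - m * A) + m * A" by simp
          then show "D dvd B" using IH(5,6) by (metis dvd_add dvd_mult)
        qed
      qed
    qed
  qed
qed

end



definition ev :: "('f::field \<Rightarrow> 'e::field) \<Rightarrow> 'e \<Rightarrow> 'f poly \<Rightarrow> 'e" where
  "ev \<phi> a h = poly (map_poly \<phi> h) a"

definition EV :: "('f::field \<Rightarrow> 'e::field) \<Rightarrow> 'e \<Rightarrow> 'f poly poly \<Rightarrow> 'e poly" where
  "EV \<phi> a Q = map_poly (ev \<phi> a) Q"

lemma ev_hom: assumes "Ring_Hom.field_hom \<phi>" shows "comm_ring_hom (ev \<phi> a)"
proof -
  interpret field_hom \<phi> by fact
  interpret m: map_poly_comm_ring_hom \<phi> ..
  show ?thesis by unfold_locales (auto simp: ev_def m.hom_add m.hom_mult)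
qed

lemma fh_zero_iff: assumes "Ring_Hom.field_hom \<phi>" shows "\<phi> x = 0 \<longleftrightarrow> x = 0"
proof -
  interpret fh: field_hom \<phi> by fact
  show ?thesis
  proof
    assume "\<phi> x = 0"
    show "x = 0"
    proof (rule ccontr)
      assume "x \<noteq> 0"
      then have "\<phi> (x * inverse x) = 1" by simp
      then show False using \<open>\<phi> x = 0\<close> by (simp add: fh.hom_mult)
    qed
  qed simp
qed

lemma map_poly_fh_0: assumes "Ring_Hom.field_hom \<phi>" shows "map_poly \<phi> p = 0 \<longleftrightarrow> p = 0"
proof -
  interpret fh: field_hom \<phi> by fact
  show ?thesis by (auto simp: poly_eq_iff fh_zero_iff[OF assms])
qed

lemma ev_const: assumes "Ring_Hom.field_hom \<phi>" shows "ev \<phi> a [:c:] = \<phi> c"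
proof -
  interpret fh: field_hom \<phi> by fact
  show ?thesis by (simp add: ev_def fh.map_poly_pCons_hom)
qed

lemma subf_UNIV: "subf (UNIV :: 'a::field set)"
  by unfold_locales auto

lemma bezout_field:
  fixes A B :: "'a::field poly"
  shows "\<exists>S T D. S * A + T * B = D \<and> D dvd A \<and> D dvd B"
proof -
  interpret subf "UNIV :: 'a set" by (rule subf_UNIV)
  show ?thesis using bezout_K[of A B] by (auto simp: inK_def)
qed

lemma coprime_bez:
  fixes g h :: "'a::field poly"
  assumes irr: "irreducible g" and nd: "\<not> g dvd h"
  shows "\<exists>s t. s * g + t * h = 1"
proof -
  obtain S T D where STD: "S * g + T * h = D" "D dvd g" "D dvd h" using bezout_field by blast
  obtain k where k: "g = D * k" using STD(2) by (auto simp: dvd_def)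
  have "is_unit D \<or> is_unit k" using irreducibleD[OF irr k] .
  moreover have "\<not> is_unit k"
  proof
    assume "is_unit k"
    then have "g dvd D" using k dvd_mult_unit_iff[of k g D] by simp
    then show False using STD(3) nd dvd_trans by blast
  qed
  ultimately have "is_unit D" by blast
  then obtain c where c: "D = [:c:]" "c dvd 1" using is_unit_poly_iff by blast
  then have c0: "c \<noteq> 0" by auto
  have "Polynomial.smult (inverse c) S * g + Polynomial.smult (inverse c) T * h = Polynomial.smult (inverse c) D"
    using STD(1) by (metis smult_add_right mult_smult_left)
  also have "\<dots> = 1" using c c0 by (simp add: one_pCons)
  finally show ?thesis by blast
qed

lemma ev_zero_dvd:
  assumes hom: "Ring_Hom.field_hom \<phi>" and irr: "irreducible g"
    and ga: "ev \<phi> a g = 0" and h: "ev \<phi> a h = 0"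
  shows "g dvd h"
proof (rule ccontr)
  assume "\<not> g dvd h"
  then obtain s t where eq: "s * g + t * h = 1" using coprime_bez[OF irr] by blast
  interpret e: comm_ring_hom "ev \<phi> a" by (rule ev_hom[OF hom])
  have "ev \<phi> a (s * g + t * h) = 0"
    by (simp add: e.hom_add e.hom_mult ga h)
  with eq show False by simp
qed

lemma ev_inverse:
  assumes hom: "Ring_Hom.field_hom \<phi>" and irr: "irreducible g"
    and ga: "ev \<phi> a g = 0" and h: "ev \<phi> a h \<noteq> 0"
  shows "\<exists>t. ev \<phi> a t = inverse (ev \<phi> a h)"
proof -
  interpret e: comm_ring_hom "ev \<phi> a" by (rule ev_hom[OF hom])
  have "\<not> g dvd h"
  proof
    assume "g dvd h"
    then obtain k where "h = g * k" by (auto simp: dvd_def)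
    have "ev \<phi> a h = 0" using \<open>h = g * k\<close> ga by (simp add: e.hom_mult)
    with h show False by simp
  qed
  then obtain s t where eq: "s * g + t * h = 1" using coprime_bez[OF irr] by blast
  have "ev \<phi> a t * ev \<phi> a h = 1"
    using arg_cong[OF eq, of "ev \<phi> a"] by (simp add: e.hom_add e.hom_mult ga)
  then show ?thesis using h by (intro exI[of _ t]) (simp add: field_simps)
qed

lemma ev_subf:
  assumes hom: "Ring_Hom.field_hom \<phi>" and irr: "irreducible g" and ga: "ev \<phi> a g = 0"
  shows "subf (range (ev \<phi> a))"
proof -
  interpret e: comm_ring_hom "ev \<phi> a" by (rule ev_hom[OF hom])
  show ?thesis
  proof
    show "0 \<in> range (ev \<phi> a)" by (metis e.hom_zero rangeI)
    show "1 \<in> range (ev \<phi> a)" by (metis e.hom_one rangeI)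
    fix x y assume "x \<in> range (ev \<phi> a)" "y \<in> range (ev \<phi> a)"
    then obtain u v where "x = ev \<phi> a u" "y = ev \<phi> a v" by auto
    then show "x + y \<in> range (ev \<phi> a)" "x * y \<in> range (ev \<phi> a)" "- x \<in> range (ev \<phi> a)"
      by (metis e.hom_add rangeI, metis e.hom_mult rangeI, metis e.hom_uminus rangeI)
    show "inverse x \<in> range (ev \<phi> a)"
    proof (cases "x = 0")
      case True then show ?thesis using \<open>0 \<in> range (ev \<phi> a)\<close> by simp
    next
      case False
      then obtain t where "ev \<phi> a t = inverse x" using ev_inverse[OF hom irr ga, of u] \<open>x = ev \<phi> a u\<close> by auto
      then show ?thesis by (metis rangeI)
    qed
  qed
qed

lemma lift_poly:
  assumes hom: "comm_ring_hom f" and "inK (range f) p"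
  shows "\<exists>P. map_poly f P = p"
  using assms(2)
proof (induction p)
  case 0
  then show ?case by (intro exI[of _ 0]) simp
next
  case (pCons a p)
  interpret comm_ring_hom f by fact
  have "inK (range f) p" using pCons.prems by (auto simp: inK_def coeff_pCons split: nat.splits dest: spec[of _ "Suc _"])
  then obtain P where P: "map_poly f P = p" using pCons.IH by blast
  have "a \<in> range f" using pCons.prems unfolding inK_def by (metis coeff_pCons_0)
  then obtain b where "f b = a" by auto
  then show ?case using P by (intro exI[of _ "pCons b P"]) (simp add: map_poly_pCons_hom)
qed

lemma split_root:
  fixes D :: "'e::field poly"
  assumes "D dvd prod_list (map (\<lambda>r. [:-r, 1:]) rs)" "\<not> is_unit D"
  shows "\<exists>y. poly D y = 0"
  using assms
proof (induction rs)
  case Nil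
  then show ?case by simp
next
  case (Cons r rs)
  show ?case
  proof (cases "poly D r = 0")
    case True then show ?thesis by blast
  next
    case False
    then have "\<not> [:-r, 1:] dvd D" by (simp add: poly_eq_0_iff_dvd)
    have irr: "irreducible [:-r, 1:]" by (rule irreducible_linear_field_poly) simp
    obtain s t where st: "s * [:-r, 1:] + t * D = 1"
      using coprime_bez[OF irr \<open>\<not> [:-r, 1:] dvd D\<close>] by blast
    obtain P where P: "prod_list (map (\<lambda>r. [:-r, 1:]) rs) = P" by blast
    have "D dvd [:-r, 1:] * P" using Cons.prems(1) P by simp
    then have "D dvd s * ([:-r, 1:] * P) + t * D * P" by (simp add: dvd_mult2)
    also have "s * ([:-r, 1:] * P) + t * D * P = P" using st by (metis mult.assoc distrib_right mult_1)
    finally have "D dvd prod_list (map (\<lambda>r. [:-r, 1:]) rs)" using P by simp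
    then show ?thesis using Cons.IH Cons.prems(2) by blast
  qed
qed

lemma transfer:
  fixes \<phi> :: "'f::field \<Rightarrow> 'e::field"
  assumes hom: "Ring_Hom.field_hom \<phi>" and irr: "irreducible g"
    and ga: "ev \<phi> a g = 0" and gb: "ev \<phi> b g = 0"
    and split: "map_poly \<phi> B = Polynomial.smult c (prod_list (map (\<lambda>r. [:-r, 1:]) rs))"
    and B0: "B \<noteq> 0"
    and com: "poly (EV \<phi> a Q) y = 0" "poly (map_poly \<phi> B) y = 0"
  shows "\<exists>z. poly (EV \<phi> b Q) z = 0 \<and> poly (map_poly \<phi> B) z = 0"
proof (rule ccontr)
  assume nz: "\<not> ?thesis"
  interpret fh: field_hom \<phi> by fact
  interpret eb: comm_ring_hom "ev \<phi> b" by (rule ev_hom[OF hom])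
  interpret ea: comm_ring_hom "ev \<phi> a" by (rule ev_hom[OF hom])
  interpret Eb: map_poly_comm_ring_hom "ev \<phi> b" ..
  interpret Ea: map_poly_comm_ring_hom "ev \<phi> a" ..
  interpret K: subf "range (ev \<phi> b)" by (rule ev_subf[OF hom irr gb])
  define QB where "QB = map_poly (\<lambda>c. [:c:]) B"
  have EVQB: "EV \<phi> x QB = map_poly \<phi> B" for x
    unfolding EV_def QB_def by (subst map_poly_map_poly) (auto simp: o_def ev_const[OF hom, unfolded ev_def] ev_def)
  have inKQ: "inK (range (ev \<phi> b)) (EV \<phi> b P)" for P
    by (auto simp: inK_def EV_def)
  obtain S T D where STD: "inK (range (ev \<phi> b)) S" "inK (range (ev \<phi> b)) T" "inK (range (ev \<phi> b)) D"
    "S * EV \<phi> b Q + T * EV \<phi> b QB = D" "D dvd EV \<phi> b Q" "D dvd EV \<phi> b QB"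
    using K.bezout_K[OF inKQ inKQ] by blast
  have c0: "c \<noteq> 0" using split B0 map_poly_fh_0[OF hom] by (metis smult_0_left)
  have "is_unit D"
  proof (rule ccontr)
    assume "\<not> is_unit D"
    have "D dvd Polynomial.smult c (prod_list (map (\<lambda>r. [:-r, 1:]) rs))" using STD(6) EVQB split by simp
    then have "D dvd prod_list (map (\<lambda>r. [:-r, 1:]) rs)" using c0 by (simp add: dvd_smult_iff)
    then obtain z where "poly D z = 0" using split_root \<open>\<not> is_unit D\<close> by blast
    then have "poly (EV \<phi> b Q) z = 0" "poly (map_poly \<phi> B) z = 0"
      using STD(5,6) EVQB by (auto simp: dvd_def)
    then show False using nz by blast
  qed
  then obtain d where d: "D = [:d:]" "d dvd 1" using is_unit_poly_iff by blast
  then have d0: "d \<noteq> 0" by auto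
  have dK: "inverse d \<in> range (ev \<phi> b)" using STD(3) d by (metis K.iv coeff_pCons_0 inK_def)
  have eq1: "Polynomial.smult (inverse d) S * EV \<phi> b Q + Polynomial.smult (inverse d) T * EV \<phi> b QB = 1"
  proof -
    have "Polynomial.smult (inverse d) S * EV \<phi> b Q + Polynomial.smult (inverse d) T * EV \<phi> b QB
        = Polynomial.smult (inverse d) (S * EV \<phi> b Q + T * EV \<phi> b QB)"
      by (metis smult_add_right mult_smult_left)
    also have "\<dots> = 1" using STD(4) d d0 by (simp add: one_pCons)
    finally show ?thesis .
  qed
  obtain S0 where S0: "map_poly (ev \<phi> b) S0 = Polynomial.smult (inverse d) S"
    using lift_poly[OF ev_hom[OF hom]] K.inK_mult[OF K.inK_const[OF dK] STD(1)] by (metis mult_smult_left mult_1 smult_one)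
  obtain T0 where T0: "map_poly (ev \<phi> b) T0 = Polynomial.smult (inverse d) T"
    using lift_poly[OF ev_hom[OF hom]] K.inK_mult[OF K.inK_const[OF dK] STD(2)] by (metis mult_smult_left mult_1 smult_one)
  define Z where "Z = S0 * Q + T0 * QB - 1"
  have "EV \<phi> b Z = 0" unfolding Z_def using eq1 S0 T0
    by (simp add: EV_def Eb.hom_add Eb.hom_mult Eb.hom_minus)
  then have "\<forall>i. ev \<phi> b (coeff Z i) = 0" by (metis EV_def eb.coeff_map_poly_hom coeff_0)
  then have "\<forall>i. ev \<phi> a (coeff Z i) = 0"
    using ev_zero_dvd[OF hom irr gb] ga by (metis dvd_def ea.hom_mult mult_zero_left)
  then have "EV \<phi> a Z = 0" by (simp add: EV_def poly_eq_iff)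
  then have "EV \<phi> a S0 * EV \<phi> a Q + EV \<phi> a T0 * map_poly \<phi> B = 1"
    unfolding Z_def EV_def by (simp add: Ea.hom_add Ea.hom_mult Ea.hom_minus EVQB[unfolded EV_def])
  then have "poly (EV \<phi> a S0 * EV \<phi> a Q + EV \<phi> a T0 * map_poly \<phi> B) y = 1" by simp
  then show False using com by simp
qed



lemma fh_from_def: assumes "Defs.field_hom \<phi>" shows "Ring_Hom.field_hom \<phi>"
proof -
  have h: "\<phi> (a + b) = \<phi> a + \<phi> b" "\<phi> (a * b) = \<phi> a * \<phi> b" "\<phi> 1 = 1" for a b
    using assms by (auto simp: Defs.field_hom_def)
  have z: "\<phi> 0 = 0" using h(1)[of 0 0] by (metis add_cancel_right_right add_0)
  show ?thesis by unfold_locales (auto simp: h z)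
qed

lemma prod_lin:
  "prod_list (map (\<lambda>r. [:-r, 1:]) rs) \<noteq> (0 :: 'a::idom poly) \<and>
   degree (prod_list (map (\<lambda>r. [:-r, 1:]) rs)) = length rs"
proof (induction rs)
  case (Cons r rs)
  define P where "P = prod_list (map (\<lambda>r. [:-r, 1:]) rs)"
  have e: "prod_list (map (\<lambda>r. [:-r, 1:]) (r # rs)) = [:-r, 1:] * P"
    by (simp only: P_def list.map prod_list.Cons)
  have P: "P \<noteq> 0" "degree P = length rs" using Cons by (auto simp: P_def)
  have l: "[:-r, 1:] \<noteq> (0 :: 'a poly)" "degree [:-r, 1:] = (1 :: nat)" by auto
  have "degree ([:-r, 1:] * P) = degree [:-r, 1:] + degree P"
    by (rule degree_mult_eq) (use P l in auto)
  moreover have "[:-r, 1:] * P \<noteq> 0" using P l by (simp only: mult_eq_0_iff) simp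
  ultimately show ?case unfolding e using P l by (simp only:) simp
qed simp

lemma roots_prod:
  "poly (prod_list (map (\<lambda>r. [:-r, 1:]) rs)) x = (0 :: 'a::idom) \<longleftrightarrow> x \<in> set rs"
  by (induction rs) auto

lemma sq_factor:
  fixes rs :: "'a::idom list"
  assumes "\<not> distinct rs"
  shows "\<exists>y. poly (pderiv (Polynomial.smult cc (prod_list (map (\<lambda>r. [:-r, 1:]) rs)))) y = 0"
proof -
  obtain xs ys zs y where rs: "rs = xs @ [y] @ ys @ [y] @ zs" using not_distinct_decomp[OF assms] by blast
  define A where "A = [:-y, 1:]"
  define H where "H = Polynomial.smult cc (prod_list (map (\<lambda>r. [:-r, 1:]) (xs @ ys @ zs)))"
  have "Polynomial.smult cc (prod_list (map (\<lambda>r. [:-r, 1:]) rs)) = A * (A * H)"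
  proof -
    have "prod_list (map (\<lambda>r. [:-r, 1:]) rs) = A * (A * prod_list (map (\<lambda>r. [:-r, 1:]) (xs @ ys @ zs)))"
      by (simp only: rs A_def map_append prod_list.append list.map prod_list.Cons prod_list.Nil
          append_Cons append_Nil mult_1_right mult_ac)
    then show ?thesis by (simp only: H_def mult_smult_right)
  qed
  moreover have "pderiv (A * (A * H)) = A * (pderiv (A * H) + H * pderiv A)"
    by (simp add: pderiv_mult algebra_simps)
  ultimately show ?thesis by (intro exI[of _ y]) (simp add: A_def)
qed

lemma qs_period:
  fixes r :: "'a::comm_ring_1"
  assumes "r ^ (q ^ n) = r" "n \<ge> 1" "r ^ q \<noteq> r"
  shows "\<exists>s>1. \<forall>i. r ^ (q ^ i) = r \<longrightarrow> s dvd i"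
proof -
  define s where "s = (LEAST s. 0 < s \<and> r ^ (q ^ s) = r)"
  have ex: "0 < n \<and> r ^ (q ^ n) = r" using assms by simp
  have s: "0 < s" "r ^ (q ^ s) = r" using LeastI[of "\<lambda>s. 0 < s \<and> r ^ (q ^ s) = r", OF ex] by (auto simp: s_def)
  have "s \<noteq> 1" using s assms(3) by auto
  then have s1: "s > 1" using s by simp
  have per: "r ^ (q ^ (s * t)) = r" for t
  proof (induction t)
    case (Suc t)
    have "q ^ (s * Suc t) = q ^ (s * t) * q ^ s" by (simp add: power_add)
    then have "r ^ (q ^ (s * Suc t)) = (r ^ (q ^ (s * t))) ^ (q ^ s)"
      by (simp only: power_mult)
    then show ?case using Suc s by simp
  qed simp
  have "s dvd i" if "r ^ (q ^ i) = r" for i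
  proof (rule ccontr)
    assume nd: "\<not> s dvd i"
    have "i = s * (i div s) + i mod s" by simp
    then have "r ^ (q ^ i) = (r ^ (q ^ (s * (i div s)))) ^ (q ^ (i mod s))"
      by (metis power_add power_mult)
    then have "r ^ (q ^ (i mod s)) = r" using per that by simp
    moreover have "0 < i mod s" using nd by (simp add: dvd_eq_mod_eq_0)
    ultimately have "s \<le> i mod s" unfolding s_def by (intro Least_le) simp
    moreover have "i mod s < s" using s by simp
    ultimately show False by simp
  qed
  then show ?thesis using s1 by blast
qed

lemma final_arith:
  fixes A B d N :: nat
  assumes "N - 1 \<le> d * (A - 1)" "N = B * A" "A \<ge> 1" "B \<ge> 2"
  shows "d \<ge> B + 1"
proof (rule ccontr)
  assume "\<not> ?thesis"
  then have "d \<le> B" by simp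
  then have "d * (A - 1) \<le> B * (A - 1)" by (rule mult_le_mono1)
  also have "B * (A - 1) = B * A - B" by (simp add: right_diff_distrib')
  finally have "B * A - 1 \<le> B * A - B" using assms by simp
  moreover have "B * A \<ge> B" using assms by simp
  ultimately show False using assms by linarith
qed



theorem theorem7p9:
  fixes p q n k d :: nat
    and L :: "'f::field poly"
    and \<phi> :: "'f \<Rightarrow> 'e::field"
    and \<alpha> \<beta> :: 'e
  assumes "prime p"
    and "\<exists>m\<ge>1. q = p ^ m"
    and "CHAR('f) = p"
    and "card {x::'f. x ^ q = x} = q"
    and "is_q_poly q L" and "lead_coeff L = 1" and "degree L = q ^ n"
    and "irreducible (L div [:0, 1:])"
    and "\<not> (\<exists>s>1. is_qs_poly q s L)"
    and "1 \<le> k" and "k \<le> n"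
    and "coeff L (q ^ (n - k)) \<noteq> 0"
    and "\<forall>i. n - k < i \<and> i < n \<longrightarrow> coeff L (q ^ i) = 0"
    and "is_splitting_field \<phi> L"
    and "poly (map_poly \<phi> L) \<alpha> = 0" and "poly (map_poly \<phi> L) \<beta> = 0"
    and "\<forall>a b::'e. a ^ q = a \<and> b ^ q = b \<and> a * \<alpha> + b * \<beta> = 0 \<longrightarrow> a = 0 \<and> b = 0"
    and "0 < d"
    and "\<exists>c::nat \<Rightarrow> 'f. (\<exists>i\<le>d. c i \<noteq> 0) \<and>
           (\<Sum>i\<le>d. \<phi> (c i) * \<alpha> ^ (d - i) * \<beta> ^ i) = 0"
  shows "d \<ge> q ^ k + 1"
proof -
  note A = assms
  have hom: "Ring_Hom.field_hom \<phi>" using A(14) by (intro fh_from_def) (simp add: is_splitting_field_def)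
  interpret fh: field_hom \<phi> by (rule hom)
  interpret mfh: map_poly_idom_hom \<phi> ..
  have inj: "\<phi> x = \<phi> y \<longleftrightarrow> x = y" for x y
    using fh_zero_iff[OF hom, of "x - y"] by (simp add: fh.hom_minus)
  obtain m where m: "m \<ge> 1" "q = p ^ m" using A(2) by blast
  have p2: "p \<ge> 2" using A(1) by (simp add: prime_ge_2_nat)
  have "p ^ 1 \<le> p ^ m" by (rule power_increasing) (use m p2 in auto)
  then have q2: "q \<ge> 2" using m p2 by simp
  have pdq: "p dvd q" using m by (simp add: dvd_power)
  have charf: "of_nat p = (0::'f)" using A(3) by (metis of_nat_CHAR)
  have chare: "of_nat p = (0::'e)" using arg_cong[OF charf, of \<phi>] by (simp add: fh.hom_of_nat)
  have negq: "(-1::'e) ^ q = -1"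
  proof (cases "p = 2")
    case True
    then have "(1::'e) + 1 = 0" using chare by simp
    then have "(-1::'e) = 1" by (rule minus_unique)
    then show ?thesis by (metis power_one)
  next
    case False
    then have "odd p" using A(1) p2 False by (intro prime_odd_nat) auto
    then have "odd q" using m by simp
    then show ?thesis by simp
  qed
  have a0: "\<alpha> \<noteq> 0"
  proof
    assume "\<alpha> = 0"
    then show False using A(17)[rule_format, of 1 0] q2 by simp
  qed
  define \<gamma> where "\<gamma> = \<beta> / \<alpha>"
  have bg: "\<beta> = \<gamma> * \<alpha>" using a0 by (simp add: \<gamma>_def)
  have gq: "\<gamma> ^ q \<noteq> \<gamma>"
  proof
    assume "\<gamma> ^ q = \<gamma>"
    then show False using A(17)[rule_format, of \<gamma> "-1"] negq bg by simp
  qed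
  define SF where "SF = {x::'f. x ^ q = x}"
  define SE where "SE = {x::'e. x ^ q = x}"
  have SE_eq: "SE = \<phi> ` SF"
  proof -
    define X where "X = (monom 1 q - [:0, 1:] :: 'e poly)"
    have "coeff [:0, 1:] q = (0::'e)" using q2 by (intro coeff_eq_0) simp
    then have cX: "coeff X q = 1" by (simp add: X_def coeff_monom)
    then have X0: "X \<noteq> 0" by auto
    have "degree X \<le> q" unfolding X_def
      by (rule order.trans[OF degree_diff_le_max]) (use q2 in \<open>auto simp: degree_monom_eq\<close>)
    moreover have "SE = {x. poly X x = 0}" by (auto simp: SE_def X_def poly_monom)
    ultimately have fin: "finite SE" and cE: "card SE \<le> q"
      using poly_roots_finite[OF X0] card_poly_roots_bound[OF X0] by auto
    have sub: "\<phi> ` SF \<subseteq> SE" by (auto simp: SF_def SE_def fh.hom_power[symmetric])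
    have "card (\<phi> ` SF) = card SF" by (rule card_image) (auto simp: inj_on_def inj)
    also have "card SF = q" using A(4) by (simp add: SF_def)
    finally have "card (\<phi> ` SF) = q" .
    then show ?thesis using card_subset_eq[OF fin sub] card_mono[OF fin sub] cE by simp
  qed

  have noroot: "\<And>e. e \<in> SE \<Longrightarrow> e \<noteq> \<gamma>" using gq by (auto simp: SE_def)
  obtain c where c: "\<exists>i\<le>d. c i \<noteq> 0" "(\<Sum>i\<le>d. \<phi> (c i) * \<alpha> ^ (d - i) * \<beta> ^ i) = 0"
    using A(19) by blast
  define f0 where "f0 = (\<Sum>i\<le>d. monom (c i) i)"
  have cf0: "coeff f0 j = (if j \<le> d then c j else 0)" for j
    by (simp add: f0_def coeff_sum coeff_monom)
  have f00: "f0 \<noteq> 0" using c(1) cf0 by (metis coeff_0)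
  have df0: "degree f0 \<le> d" by (rule degree_le) (simp add: cf0)
  have pf0: "poly (map_poly \<phi> f0) \<gamma> = (\<Sum>i\<le>d. \<phi> (c i) * \<gamma> ^ i)"
    by (simp add: f0_def mfh.hom_sum poly_sum poly_monom)
  have "\<alpha> ^ d * poly (map_poly \<phi> f0) \<gamma> = (\<Sum>i\<le>d. \<phi> (c i) * \<alpha> ^ (d - i) * \<beta> ^ i)"
    unfolding pf0 sum_distrib_left
  proof (rule sum.cong)
    fix i assume "i \<in> {..d}"
    then have "\<alpha> ^ d = \<alpha> ^ (d - i) * \<alpha> ^ i" by (simp add: power_add[symmetric])
    then show "\<alpha> ^ d * (\<phi> (c i) * \<gamma> ^ i) = \<phi> (c i) * \<alpha> ^ (d - i) * \<beta> ^ i"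
      by (simp add: bg power_mult_distrib)
  qed simp
  then have "poly (map_poly \<phi> f0) \<gamma> = 0" using c(2) a0 by simp
  define P where "P = (\<lambda>f. f \<noteq> 0 \<and> poly (map_poly \<phi> f) \<gamma> = 0)"
  have "P f0" using f00 \<open>poly (map_poly \<phi> f0) \<gamma> = 0\<close> by (simp add: P_def)
  then obtain f where Pf: "P f" and fmin: "\<And>h. P h \<Longrightarrow> degree f \<le> degree h"
    using ex_has_least_nat[of P f0 degree] by blast
  have f0': "f \<noteq> 0" and fg: "poly (map_poly \<phi> f) \<gamma> = 0" using Pf by (auto simp: P_def)
  have df: "degree f \<le> d" using fmin[OF \<open>P f0\<close>] df0 by simp
  have fnoroot: "poly (map_poly \<phi> f) e \<noteq> 0" if eSE: "e \<in> SE" for e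
  proof
    assume e0: "poly (map_poly \<phi> f) e = 0"
    obtain c0 where c0: "e = \<phi> c0" "c0 \<in> SF" using eSE SE_eq by auto
    have "\<phi> (poly f c0) = 0" using e0 c0 by simp
    then have "poly f c0 = 0" using fh_zero_iff[OF hom] by blast
    then obtain f1 where f1: "f = [:-c0, 1:] * f1" using poly_eq_0_iff_dvd by (metis dvdE)
    have f10: "f1 \<noteq> 0" using f1 f0' by auto
    have "degree f = degree [:-c0, 1:] + degree f1" unfolding f1 by (rule degree_mult_eq) (use f10 in auto)
    then have dlt: "degree f1 < degree f" by simp
    have "poly (map_poly \<phi> f) \<gamma> = (\<gamma> - e) * poly (map_poly \<phi> f1) \<gamma>"
      unfolding f1 mfh.hom_mult using c0 by (simp add: fh.hom_uminus algebra_simps)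
    then have "poly (map_poly \<phi> f1) \<gamma> = 0" using fg noroot[OF eSE] by simp
    then have "P f1" using f10 by (simp add: P_def)
    then show False using fmin dlt by fastforce
  qed
  define D where "D = degree f"
  have dphif: "degree (map_poly \<phi> f) = D" unfolding D_def by (rule degree_map_poly) (simp add: fh_zero_iff[OF hom])
  have polyf: "poly (map_poly \<phi> f) z = (\<Sum>i\<le>D. \<phi> (coeff f i) * z ^ i)" for z
    by (simp add: poly_altdef dphif D_def)
  define Q where "Q = (\<Sum>i\<le>D. monom (monom (coeff f i) (D - i)) i)"
  have evQ: "poly (EV \<phi> a Q) y = (\<Sum>i\<le>D. \<phi> (coeff f i) * a ^ (D - i) * y ^ i)" for a y
  proof -
    interpret ea: comm_ring_hom "ev \<phi> a" by (rule ev_hom[OF hom])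
    interpret Ea: map_poly_comm_ring_hom "ev \<phi> a" ..
    show ?thesis unfolding Q_def EV_def
      by (simp add: Ea.hom_sum poly_sum poly_monom ev_def mult_ac)
  qed
  have evQ2: "poly (EV \<phi> a Q) y = a ^ D * poly (map_poly \<phi> f) (y / a)" if "a \<noteq> 0" for a y
    unfolding evQ polyf sum_distrib_left
  proof (rule sum.cong)
    fix i assume "i \<in> {..D}"
    then have "a ^ D = a ^ (D - i) * a ^ i" by (simp add: power_add[symmetric])
    then show "\<phi> (coeff f i) * a ^ (D - i) * y ^ i = a ^ D * (\<phi> (coeff f i) * (y / a) ^ i)"
      using that by (simp add: power_divide field_simps)
  qed simp
  define g where "g = L div [:0, 1:]"
  have L0: "L \<noteq> 0" using A(6) by auto
  have cL0: "coeff L 0 = 0"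
  proof (rule ccontr)
    assume "coeff L 0 \<noteq> 0"
    then obtain i where "0 = q ^ i" using A(5)[unfolded is_q_poly_def] by blast
    then show False using q2 by simp
  qed
  have "poly L 0 = 0" using cL0 by (simp add: poly_0_coeff_0)
  then have "[:0, 1:] dvd L" using poly_eq_0_iff_dvd[of L 0] by simp
  then have Lg: "L = [:0, 1:] * g" unfolding g_def by (rule dvd_mult_div_cancel[symmetric])
  have phiL: "map_poly \<phi> L = [:0, 1:] * map_poly \<phi> g"
    using Lg by (simp add: mfh.hom_mult fh.map_poly_pCons_hom)
  have evg: "ev \<phi> u g = 0" if "poly (map_poly \<phi> L) u = 0" "u \<noteq> 0" for u
    using that phiL by (simp add: ev_def)
  have cL1: "coeff L 1 \<noteq> 0"
  proof
    assume c1: "coeff L 1 = 0"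
    have "coeff g 0 = coeff L 1" using Lg by simp
    then have "poly g 0 = 0" using c1 by (simp add: poly_0_coeff_0)
    then obtain h where h: "g = [:0, 1:] * h" using poly_eq_0_iff_dvd[of g 0] by (auto elim: dvdE)
    have "is_unit [:0, 1::'f:] \<or> is_unit h" using irreducibleD[OF A(8)[folded g_def] h] .
    moreover have "\<not> is_unit [:0, 1::'f:]" by (simp add: is_unit_poly_iff)
    ultimately have "is_unit h" by blast
    then have "degree h = 0" by (simp add: is_unit_iff_degree)
    have "h \<noteq> 0" using \<open>is_unit h\<close> by auto
    then have "degree g = 1" using h \<open>degree h = 0\<close> by (simp add: degree_mult_eq)
    then have "g \<noteq> 0" by auto
    then have "degree L = 2" using Lg \<open>degree g = 1\<close> by (simp add: degree_pCons_eq)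
    then have qn: "q ^ n = 2" using A(7) by simp
    have "n = 1"
    proof (rule ccontr)
      assume "n \<noteq> 1"
      then have "n \<ge> 2" using A(10,11) by simp
      then have "q ^ 2 \<le> q ^ n" using q2 by (intro power_increasing) auto
      moreover have "2 * 2 \<le> q * q" using mult_le_mono[OF q2 q2] .
      ultimately show False using qn by (simp add: power2_eq_square)
    qed
    then have "k = 1" using A(10,11) by simp
    then show False using A(12) c1 \<open>n = 1\<close> by simp
  qed

  obtain cc rs where split: "map_poly \<phi> L = Polynomial.smult cc (prod_list (map (\<lambda>r. [:-r, 1:]) rs))"
    using A(14) by (auto simp: is_splitting_field_def)
  have cc0: "cc \<noteq> 0" using split L0 map_poly_fh_0[OF hom] by (metis smult_0_left)
  define V where "V = {x. poly (map_poly \<phi> L) x = 0}"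
  have dphiL: "degree (map_poly \<phi> L) = q ^ n"
    using A(7) by (simp add: degree_map_poly fh_zero_iff[OF hom])
  have Vset: "V = set rs" unfolding V_def split using cc0 roots_prod by auto
  have lenrs: "length rs = q ^ n" using dphiL split prod_lin[of rs] cc0 by simp
  have pderL: "pderiv L = [:coeff L 1:]"
  proof (rule poly_eqI)
    fix j
    show "coeff (pderiv L) j = coeff [:coeff L 1:] j"
    proof (cases j)
      case 0 then show ?thesis by (simp add: coeff_pderiv)
    next
      case (Suc j')
      have "of_nat (Suc j) * coeff L (Suc j) = (0::'f)"
      proof (cases "coeff L (Suc j) = 0")
        case False
        then obtain i where i: "Suc j = q ^ i" using A(5)[unfolded is_q_poly_def] by blast
        have "i \<noteq> 0"
        proof
          assume "i = 0"
          then show False using i Suc by simp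
        qed
        then have "q dvd q ^ i" by (simp add: dvd_power)
        then have "p dvd Suc j" using i pdq by (metis dvd_trans)
        then have "of_nat (Suc j) = (0::'f)" using A(3) of_nat_eq_0_iff_char_dvd[of "Suc j", where 'a='f] by (simp only:)
        then show ?thesis by simp
      qed simp
      then show ?thesis using Suc by (simp add: coeff_pderiv)
    qed
  qed
  have dist: "distinct rs"
  proof (rule ccontr)
    assume "\<not> distinct rs"
    then obtain y where "poly (pderiv (map_poly \<phi> L)) y = 0" using sq_factor split by metis
    moreover have "pderiv (map_poly \<phi> L) = [:\<phi> (coeff L 1):]"
      by (simp add: fh.map_poly_pderiv[symmetric] pderL fh.map_poly_pCons_hom)
    ultimately show False using cL1 fh_zero_iff[OF hom] by simp
  qed
  have cardV: "card V = q ^ n" using Vset dist lenrs by (simp add: distinct_card)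
  have finV: "finite V" using Vset by simp
  have aV: "\<alpha> \<in> V" and bV: "\<beta> \<in> V" using A(15,16) by (auto simp: V_def)
  have zV: "0 \<in> V" using cL0 by (simp add: V_def poly_0_coeff_0)
  define R where "R = {r. poly (map_poly \<phi> f) r = 0 \<and> r ^ q \<noteq> r}"
  have cover: "\<exists>r\<in>R. r * u \<in> V" if uV: "u \<in> V" and u0: "u \<noteq> 0" for u
  proof -
    have "poly (EV \<phi> \<alpha> Q) \<beta> = 0" using evQ2[OF a0] fg by (simp add: \<gamma>_def)
    then obtain z where z: "poly (EV \<phi> u Q) z = 0" "poly (map_poly \<phi> L) z = 0"
      using transfer[OF hom A(8)[folded g_def] evg[OF A(15) a0] evg[OF _ u0] split L0, where Q=Q and y=\<beta>]
        uV A(16) by (auto simp: V_def)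
    define r where "r = z / u"
    have "u ^ D * poly (map_poly \<phi> f) r = 0" using z evQ2[OF u0] by (simp add: r_def)
    then have "poly (map_poly \<phi> f) r = 0" using u0 by simp
    then have "r ^ q \<noteq> r" using fnoroot by (auto simp: SE_def)
    moreover have "r * u \<in> V" using z u0 by (simp add: r_def V_def)
    ultimately show ?thesis using \<open>poly (map_poly \<phi> f) r = 0\<close> by (auto simp: R_def)
  qed
  have phif0: "map_poly \<phi> f \<noteq> 0" using f0' map_poly_fh_0[OF hom] by simp
  have finR: "finite R" by (rule finite_subset[OF _ poly_roots_finite[OF phif0]]) (auto simp: R_def)
  have cardR: "card R \<le> d"
  proof -
    have "card R \<le> card {x. poly (map_poly \<phi> f) x = 0}"
      by (rule card_mono[OF poly_roots_finite[OF phif0]]) (auto simp: R_def)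
    also have "\<dots> \<le> degree (map_poly \<phi> f)" by (rule card_poly_roots_bound[OF phif0])
    finally show ?thesis using dphif df D_def by simp
  qed
  define W where "W = (\<lambda>r. {u \<in> V. u \<noteq> 0 \<and> r * u \<in> V})"
  have polyL: "poly (map_poly \<phi> L) x = (\<Sum>j\<le>q ^ n. \<phi> (coeff L j) * x ^ j)" for x
    by (simp add: poly_altdef dphiL A(7))
  have Wbound: "card (W r) + 1 \<le> q ^ (n - k)" if rR: "r \<in> R" for r
  proof -
    define M where "M = (\<Sum>j\<le>q ^ n. monom (\<phi> (coeff L j) * (r ^ j - r ^ (q ^ n))) j)"
    have cM: "coeff M j = (if j \<le> q ^ n then \<phi> (coeff L j) * (r ^ j - r ^ (q ^ n)) else 0)" for j
      by (simp add: M_def coeff_sum coeff_monom)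
    have pM: "poly M x = poly (map_poly \<phi> L) (r * x) - r ^ (q ^ n) * poly (map_poly \<phi> L) x" for x
      by (simp add: M_def poly_sum poly_monom polyL sum_distrib_left sum_subtractf[symmetric]
          algebra_simps power_mult_distrib)
    have M0: "M \<noteq> 0"
    proof
      assume "M = 0"
      then have cz: "\<phi> (coeff L j) * (r ^ j - r ^ (q ^ n)) = 0" if "j \<le> q ^ n" for j
        using cM[of j] that by simp
      have "1 \<le> q ^ n" using q2 by simp
      then have "r = r ^ (q ^ n)" using cz[of 1] cL1 fh_zero_iff[OF hom] by simp
      moreover have "r ^ q \<noteq> r" using rR by (simp add: R_def)
      ultimately obtain s where s: "s > 1" "\<And>i. r ^ (q ^ i) = r \<Longrightarrow> s dvd i"
        using qs_period[of r q n] A(10,11) by auto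
      have "is_qs_poly q s L" unfolding is_qs_poly_def
      proof (intro allI impI)
        fix j assume j: "coeff L j \<noteq> 0"
        then obtain i where i: "j = q ^ i" using A(5)[unfolded is_q_poly_def] by blast
        have "j \<le> q ^ n" using j A(7) le_degree by metis
        then have "r ^ j = r ^ (q ^ n)" using cz[of j] j fh_zero_iff[OF hom] by simp
        then have "r ^ (q ^ i) = r" using i \<open>r = r ^ (q ^ n)\<close> by simp
        then show "\<exists>i. s dvd i \<and> j = q ^ i" using s(2) i by blast
      qed
      then show False using A(9) s(1) by blast
    qed
    have degM: "degree M \<le> q ^ (n - k)"
    proof (rule degree_le, intro allI impI)
      fix j assume j: "q ^ (n - k) < j"
      show "coeff M j = 0"
      proof (cases "j \<le> q ^ n")
        case False then show ?thesis by (simp add: cM)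
      next
        case True
        show ?thesis
        proof (cases "j = q ^ n")
          case True then show ?thesis by (simp add: cM)
        next
          case False
          have "coeff L j = 0"
          proof (rule ccontr)
            assume "coeff L j \<noteq> 0"
            then obtain i where i: "j = q ^ i" using A(5)[unfolded is_q_poly_def] by blast
            have "n - k < i" using j i q2 power_less_imp_less_exp[of q "n - k" i] by simp
            moreover have "i < n" using True False i q2 power_less_imp_less_exp[of q i n] by simp
            ultimately show False using A(13) i \<open>coeff L j \<noteq> 0\<close> by blast
          qed
          then show ?thesis by (simp add: cM)
        qed
      qed
    qed
    have sub: "insert 0 (W r) \<subseteq> {x. poly M x = 0}"
      using zV by (auto simp: W_def pM V_def)
    have "card (insert 0 (W r)) \<le> q ^ (n - k)"
      using card_mono[OF poly_roots_finite[OF M0] sub] card_poly_roots_bound[OF M0] degM by linarith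
    moreover have "finite (W r)" using finV by (auto simp: W_def)
    moreover have "0 \<notin> W r" by (simp add: W_def)
    ultimately show ?thesis by simp
  qed
  have "V - {0} \<subseteq> (\<Union>r\<in>R. W r)" using cover by (force simp: W_def)
  then have "card (V - {0}) \<le> card (\<Union>r\<in>R. W r)"
    by (rule card_mono[rotated]) (use finR finV in \<open>auto simp: W_def\<close>)
  also have "\<dots> \<le> (\<Sum>r\<in>R. card (W r))" by (rule card_UN_le[OF finR])
  also have "\<dots> \<le> (\<Sum>r\<in>R. q ^ (n - k) - 1)" by (rule sum_mono) (use Wbound in fastforce)
  also have "\<dots> = card R * (q ^ (n - k) - 1)" by simp
  also have "\<dots> \<le> d * (q ^ (n - k) - 1)" using cardR by (rule mult_le_mono1)
  finally have main: "q ^ n - 1 \<le> d * (q ^ (n - k) - 1)" using cardV zV finV by simp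
  have "q ^ n = q ^ k * q ^ (n - k)" using A(11) by (simp add: power_add[symmetric])
  moreover have "q ^ 1 \<le> q ^ k" by (rule power_increasing) (use A(10) q2 in auto)
  then have "q ^ k \<ge> 2" using q2 by simp
  moreover have "q ^ (n - k) \<ge> 1" using q2 by simp
  ultimately show ?thesis using final_arith[OF main] by simp
qed

end
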